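(* Let $\lambda<\kappa$ be infinite cardinals with $\mathrm{cf}(\lambda)>\omega$ and $\mathrm{cf}(\kappa)\ne\mathrm{cf}(\lambda)$. Then every $(\lambda,\kappa)$-graph contains a $(\lambda',\kappa)$-subgraph for some cardinal $\lambda'<\lambda$.
   Context: For infinite cardinals $\lambda<\kappa$, a $(\lambda,\kappa)$-graph is a bipartite graph with bipartition $(A,B)$, $|A|=\lambda$, $|B|=\kappa$, in which every vertex $b\in B$ has infinitely many neighbours in $A$. A $(\lambda',\kappa)$-subgraph of such a graph is a subgraph with bipartition $(C,D)$, $C\subseteq A$, $D\subseteq B$, which is itself a $(\lambda',\kappa)$-graph. *)

theory Defs
  imports Main "HOL-Library.Countable_Set"
begin

text \<open>Cardinals are represented by sets, compared via the canonical cardinal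
  well-orders card_of (Main, BNF_Cardinal_Order_Relation).\<close>

definition cofinal_in :: "'a rel \<Rightarrow> 'a set \<Rightarrow> bool" where
  "cofinal_in r X \<longleftrightarrow> X \<subseteq> Field r \<and> (\<forall>a\<in>Field r. \<exists>b\<in>X. (a, b) \<in> r)"

text \<open>X witnesses the cofinality of r: X is cofinal in r and of minimal cardinality
  among cofinal subsets; cf(r) is then the cardinality of X.\<close>
definition cf_witness :: "'a rel \<Rightarrow> 'a set \<Rightarrow> bool" where
  "cf_witness r X \<longleftrightarrow> cofinal_in r X \<and>
     (\<forall>Y. cofinal_in r Y \<longrightarrow> ordLeq3 (card_of X) (card_of Y))"

text \<open>Bipartite graph with sides A, B and edge relation E (a adjacent to b iff E a b):
  it is a (|A|,|B|)-graph if A, B are infinite and every b in B has infinitely many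
  neighbours in A.\<close>
definition lk_graph :: "'a set \<Rightarrow> 'b set \<Rightarrow> ('a \<Rightarrow> 'b \<Rightarrow> bool) \<Rightarrow> bool" where
  "lk_graph A B E \<longleftrightarrow> infinite A \<and> infinite B \<and>
     (\<forall>b\<in>B. infinite {a\<in>A. E a b})"

end

theory Submission
  imports Defs
begin

unbundle cardinal_syntax

lemma fin_less_inf: "finite S \<Longrightarrow> infinite K \<Longrightarrow> |S| <o |K|"
  by (rule finite_ordLess_infinite) (auto simp: card_of_Well_order Field_card_of card_of_well_order_on)

lemma union_bound:
  assumes K: "infinite K" and I: "|I| <o |K|" and T: "|T| <o |K|"
    and S: "\<forall>i\<in>I. |S i| \<le>o |T|"
  shows "|\<Union>i\<in>I. S i| <o |K|"
proof (cases "finite I \<and> finite T")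
  case True
  then have "\<forall>i\<in>I. finite (S i)" using S card_of_ordLeq_finite by blast
  then have "finite (\<Union>i\<in>I. S i)" using True by blast
  then show ?thesis using K fin_less_inf by blast
next
  case False
  then have inf: "infinite (I <+> T)" by auto
  have "\<forall>i\<in>I. |S i| \<le>o |I <+> T|" using S card_of_Plus2 ordLeq_transitive by blast
  then have "|\<Union>i\<in>I. S i| \<le>o |I <+> T|"
    using card_of_UNION_ordLeq_infinite[OF inf card_of_Plus1] by blast
  moreover have "|I <+> T| <o |K|" using card_of_Plus_ordLess_infinite[OF K I T] .
  ultimately show ?thesis using ordLeq_ordLess_trans by blast
qed

lemma cf_exists: "\<exists>X. cf_witness |S| X"
proof -
  let ?R = "card_of ` {Y. cofinal_in |S| Y}"
  have w: "wo_rel |S|" unfolding wo_rel_def by (rule card_of_Well_order)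
  have "Refl |S|" by (rule wo_rel.REFL[OF w])
  then have "\<forall>a\<in>S. (a, a) \<in> |S|" using refl_onD[of "Field |S|" "|S|"] by (simp add: Field_card_of)
  then have "cofinal_in |S| S"
    unfolding cofinal_in_def by (auto simp add: Field_card_of)
  then have "|S| \<in> ?R" by blast
  then have ne: "?R \<noteq> {}" by (rule ex_in_conv[THEN iffD1, OF exI])
  have co: "\<forall>r\<in>?R. Card_order r" using card_of_Card_order by blast
  from exists_minim_Card_order[OF ne co]
  obtain r where r: "r \<in> ?R" "\<forall>r'\<in>?R. r \<le>o r'" by (elim bexE) 
  from r(1) obtain X where X: "cofinal_in |S| X" "r = |X|" by blast
  have "\<forall>Y. cofinal_in |S| Y \<longrightarrow> |X| \<le>o |Y|"
  proof (intro allI impI)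
    fix Y assume "cofinal_in |S| Y"
    then have "|Y| \<in> ?R" by blast
    then show "|X| \<le>o |Y|" using r(2) X(2) by blast
  qed
  then have "cf_witness |S| X" unfolding cf_witness_def using X(1) by blast
  then show ?thesis by blast
qed

lemma below_underS:
  assumes "Card_order r" "|S| <o r"
  shows "\<exists>y\<in>Field r. |S| \<le>o |underS r y|"
proof -
  have wo: "Well_order r" using assms(1) unfolding card_order_on_def by simp
  obtain a where a: "a \<in> Field r" "|S| =o Restr r (underS r a)"
    using ordLess_iff_ordIso_Restr[OF wo card_of_Well_order] assms(2) by blast
  have "Field (Restr r (underS r a)) = underS r a"
    using wo wo_rel.underS_ofilter Field_Restr_ofilter unfolding wo_rel_def by fastforce
  moreover have "Card_order (Restr r (underS r a))"
    using a(2) card_of_Card_order Card_order_ordIso2 by blast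
  ultimately have "|underS r a| =o Restr r (underS r a)"
    using card_of_Field_ordIso by fastforce
  then have "|S| =o |underS r a|" using a(2) ordIso_symmetric ordIso_transitive by blast
  then show ?thesis using a(1) ordIso_iff_ordLeq by blast
qed

lemma wo_facts:
  shows "Refl |A|" "Total |A|" "trans |A|" "Field |A| = A" "antisym |A|"
    "\<forall>a \<in> A. \<forall>b \<in> A. (a,b) \<in> |A| \<or> (b,a) \<in> |A|"
proof -
  have w: "wo_rel |A|" unfolding wo_rel_def by (rule card_of_Well_order)
  show "Refl |A|" by (rule wo_rel.REFL[OF w])
  show "Total |A|" by (rule wo_rel.TOTAL[OF w])
  show "trans |A|" by (rule wo_rel.TRANS[OF w])
  show "antisym |A|" by (rule wo_rel.ANTISYM[OF w])
  show "Field |A| = A" by (rule Field_card_of)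
  show "\<forall>a \<in> A. \<forall>b \<in> A. (a,b) \<in> |A| \<or> (b,a) \<in> |A|"
    using wo_rel.TOTALS[OF w] by (simp only: Field_card_of)
qed

lemma cofinal_small:
  assumes "cf_witness |A| X" "|G| <o |X|" "G \<subseteq> A"
  shows "\<exists>a0\<in>A. \<forall>g\<in>G. (g, a0) \<in> |A| \<and> g \<noteq> a0"
proof (rule ccontr)
  assume nt: "\<not> ?thesis"
  have tot: "\<forall>a\<in>A. \<forall>b\<in>A. (a,b) \<in> |A| \<or> (b,a) \<in> |A|" by (rule wo_facts(6))
  have "\<forall>a\<in>A. \<exists>g\<in>G. (a, g) \<in> |A|"
  proof
    fix a assume a: "a \<in> A"
    show "\<exists>g\<in>G. (a, g) \<in> |A|"
    proof (rule ccontr)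
      assume none: "\<not> (\<exists>g\<in>G. (a, g) \<in> card_of A)"
      have "\<forall>g\<in>G. (g, a) \<in> |A| \<and> g \<noteq> a"
      proof
        fix g assume g: "g \<in> G"
        have gA: "g \<in> A" using assms(3) g by (rule subsetD)
        have n1: "(a, g) \<notin> |A|" using none g by (simp add: bex_simps)
        have d: "(a, g) \<in> |A| \<or> (g, a) \<in> |A|" using tot a gA by simp
        then have "(g, a) \<in> |A|" using n1 by simp
        moreover have "g \<noteq> a"
        proof
          assume "g = a"
          then show False using d n1 by simp
        qed
        ultimately show "(g, a) \<in> |A| \<and> g \<noteq> a" by (rule conjI)
      qed
      then have "\<exists>a0\<in>A. \<forall>g\<in>G. (g, a0) \<in> |A| \<and> g \<noteq> a0" using a by (rule bexI)
      then show False using nt by (rule notE[rotated])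
    qed
  qed
  then have cof: "cofinal_in |A| G" using assms(3) by (simp add: cofinal_in_def Field_card_of)
  have "\<forall>Y. cofinal_in |A| Y \<longrightarrow> |X| \<le>o |Y|"
    using assms(1) unfolding cf_witness_def by (rule conjunct2)
  then have "|X| \<le>o |G|" using cof by simp
  then show False using not_ordLess_ordLeq[OF assms(2)] by (rule notE[rotated])
qed

lemma cfw_D: "cf_witness |S| X \<Longrightarrow> X \<subseteq> S \<and> (\<forall>a\<in>S. \<exists>b\<in>X. (a, b) \<in> card_of S)"
  unfolding cf_witness_def cofinal_in_def by (simp add: Field_card_of)

theorem lemma4p1:
  fixes A :: "'a set" and B :: "'b set" and E :: "'a \<Rightarrow> 'b \<Rightarrow> bool"
  assumes graph: "lk_graph A B E"
    and less: "ordLess2 (card_of A) (card_of B)"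
    and cf_unc: "\<And>X. cf_witness (card_of A) X \<Longrightarrow> \<not> countable X"
    and cf_ne: "\<And>X Y. cf_witness (card_of A) X \<Longrightarrow> cf_witness (card_of B) Y \<Longrightarrow>
                   \<not> ordIso2 (card_of X) (card_of Y)"
  shows "\<exists>C D. C \<subseteq> A \<and> D \<subseteq> B \<and> ordLess2 (card_of C) (card_of A) \<and>
            ordIso2 (card_of D) (card_of B) \<and> lk_graph C D E"
proof -
  obtain X where X: "cf_witness |A| X" using cf_exists by blast
  obtain Y where Y: "cf_witness |B| Y" using cf_exists by blast
  have XA: "X \<subseteq> A" and Xcof: "\<forall>a\<in>A. \<exists>b\<in>X. (a, b) \<in> card_of A" using cfw_D[OF X] by auto
  have YB: "Y \<subseteq> B" and Ycof: "\<forall>a\<in>B. \<exists>b\<in>Y. (a, b) \<in> card_of B" using cfw_D[OF Y] by auto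
  have infA: "infinite A" using graph unfolding lk_graph_def by simp
  have infB: "infinite B" using graph unfolding lk_graph_def by simp
  have transA: "trans |A|" by (rule wo_facts)
  have transB: "trans |B|" by (rule wo_facts)
  have "\<forall>b\<in>B. \<exists>a\<in>A. infinite {a'\<in>A. E a' b \<and> (a', a) \<in> |A|}"
  proof
    fix b assume b: "b \<in> B"
    then have "infinite {a\<in>A. E a b}" using graph unfolding lk_graph_def by blast
    then obtain g :: "nat \<Rightarrow> 'a" where g: "inj g" "range g \<subseteq> {a\<in>A. E a b}"
      using infinite_countable_subset by blast
    have "|range g| <o |X|"
    proof (rule ccontr)
      assume "\<not> |range g| <o |X|"
      then have "|X| \<le>o |range g|"
        using not_ordLess_iff_ordLeq[OF card_of_Well_order card_of_Well_order] by metis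
      then have "\<exists>h. inj_on h X \<and> h ` X \<subseteq> range g"
        using card_of_ordLeq[of X "range g"] by simp
      then obtain h where h: "inj_on h X" "h ` X \<subseteq> range g" by blast
      have "countable (range g)" by simp
      then have "countable (h ` X)" using h(2) countable_subset by metis
      then have "countable X" using h(1) countable_image_inj_on by blast
      then show False using cf_unc[OF X] by blast
    qed
    then obtain a0 where a0: "a0 \<in> A" "\<forall>x\<in>range g. (x, a0) \<in> |A| \<and> x \<noteq> a0"
      using cofinal_small[OF X] g(2) by blast
    have "range g \<subseteq> {a'\<in>A. E a' b \<and> (a', a0) \<in> |A|}" using g(2) a0(2) by blast
    moreover have "infinite (range g)" using g(1) by (simp add: range_inj_infinite)
    ultimately show "\<exists>a\<in>A. infinite {a'\<in>A. E a' b \<and> (a', a) \<in> |A|}"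
      using a0(1) infinite_super by blast
  qed
  then have "\<forall>b\<in>B. \<exists>a. a \<in> A \<and> infinite {a'\<in>A. E a' b \<and> (a', a) \<in> |A|}" by blast
  from bchoice[OF this] obtain f
    where f: "\<forall>b\<in>B. f b \<in> A \<and> infinite {a'\<in>A. E a' b \<and> (a', f b) \<in> |A|}" by blast
  define Bs where "Bs a = {b\<in>B. (f b, a) \<in> |A|}" for a
  have Bsmono: "Bs a \<subseteq> Bs a'" if "(a, a') \<in> |A|" for a a'
    using that transA unfolding Bs_def trans_def by blast
  have Bcov: "B = (\<Union>x\<in>X. Bs x)"
  proof
    show "B \<subseteq> (\<Union>x\<in>X. Bs x)"
    proof
      fix b assume b: "b \<in> B"
      have "f b \<in> A" using f b by blast
      then obtain x where "x \<in> X" "(f b, x) \<in> |A|"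
        using Xcof by blast
      then have "x \<in> X" "b \<in> Bs x" using b unfolding Bs_def by simp_all
      then show "b \<in> (\<Union>x\<in>X. Bs x)" by (rule UN_I)
    qed
    show "(\<Union>x\<in>X. Bs x) \<subseteq> B" unfolding Bs_def by blast
  qed
  have XlB: "|X| <o |B|" using ordLeq_ordLess_trans[OF card_of_mono1[OF XA] less] .
  have key: "\<exists>x\<in>X. |Bs x| =o |B|"
  proof (rule ccontr)
    assume nk: "\<not> ?thesis"
    have small: "\<forall>x\<in>X. |Bs x| <o |B|"
    proof (intro ballI)
      fix x assume "x \<in> X"
      with nk have "\<not> |Bs x| =o |B|" by blast
      moreover have "|Bs x| \<le>o |B|" unfolding Bs_def by (rule card_of_mono1) blast
      ultimately show "|Bs x| <o |B|" unfolding ordLeq_iff_ordLess_or_ordIso by blast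
    qed
    have ne: "\<not> |X| =o |Y|" using cf_ne[OF X Y] .
    have "|X| <o |Y| \<or> |Y| \<le>o |X|"
      using ordLess_or_ordLeq[OF card_of_Well_order card_of_Well_order] .
    then consider "|X| <o |Y|" | "|Y| <o |X|"
      using ne ordIso_symmetric unfolding ordLeq_iff_ordLess_or_ordIso by blast
    then show False
    proof cases
      case 1
      have "\<forall>x\<in>X. \<exists>y. y \<in> B \<and> |Bs x| \<le>o |underS |B| y|"
      proof
        fix x assume "x \<in> X"
        then have "|Bs x| <o |B|" using small by blast
        from below_underS[OF card_of_Card_order this]
        show "\<exists>y. y \<in> B \<and> |Bs x| \<le>o |underS |B| y|" by (auto simp: Field_card_of)
      qed
      from bchoice[OF this] obtain yx where
        yx: "\<forall>x\<in>X. yx x \<in> B \<and> |Bs x| \<le>o |underS |B| (yx x)|" by blast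
      have "|yx ` X| <o |Y|" using ordLeq_ordLess_trans[OF card_of_image 1] .
      moreover have "yx ` X \<subseteq> B" using yx by blast
      ultimately obtain b0 where b0: "b0 \<in> B" "\<forall>z\<in>yx ` X. (z, b0) \<in> |B| \<and> z \<noteq> b0"
        using cofinal_small[OF Y] by blast
      have "\<forall>x\<in>X. |Bs x| \<le>o |underS |B| b0|"
      proof
        fix x assume x: "x \<in> X"
        have yb: "(yx x, b0) \<in> |B|" "yx x \<noteq> b0" using b0(2) x by auto
        have "underS |B| (yx x) \<subseteq> underS |B| b0"
        proof
          fix z assume "z \<in> underS |B| (yx x)"
          then have z: "(z, yx x) \<in> |B|" "z \<noteq> yx x" unfolding underS_def by auto
          have "(z, b0) \<in> |B|" using transB z(1) yb(1) unfolding trans_def by blast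
          moreover have "z \<noteq> b0"
          proof
            assume "z = b0"
            then have "(b0, yx x) \<in> |B|" using z(1) by simp
            then show False using wo_facts(5)[of B] yb unfolding antisym_def by blast
          qed
          ultimately show "z \<in> underS |B| b0" unfolding underS_def by blast
        qed
        then have "|underS |B| (yx x)| \<le>o |underS |B| b0|" by (rule card_of_mono1)
        moreover have "|Bs x| \<le>o |underS |B| (yx x)|" using yx x by blast
        ultimately show "|Bs x| \<le>o |underS |B| b0|"
          using ordLeq_transitive by blast
      qed
      note bnd = this
      have "b0 \<in> Field |B|" using b0(1) by (simp add: Field_card_of)
      from card_of_underS[OF card_of_Card_order this]
      have "|underS |B| b0| <o |B|" .
      from union_bound[OF infB XlB this bnd]
      have "|\<Union>x\<in>X. Bs x| <o |B|" .
      then have "|B| <o |B|" by (simp only: Bcov[symmetric])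
      then show False using ordLess_irreflexive by blast
    next
      case 2
      have "\<forall>y\<in>Y. \<exists>x\<in>X. |underS |B| y| \<le>o |Bs x|"
      proof
        fix y assume y: "y \<in> Y"
        show "\<exists>x\<in>X. |underS |B| y| \<le>o |Bs x|"
        proof (rule ccontr)
          assume nt: "\<not> ?thesis"
          have "\<forall>x\<in>X. |Bs x| \<le>o |underS |B| y|"
          proof
            fix x assume "x \<in> X"
            then have "\<not> |underS |B| y| \<le>o |Bs x|" using nt by blast
            then have "|Bs x| <o |underS |B| y|"
              by (simp add: not_ordLeq_iff_ordLess[OF card_of_Well_order card_of_Well_order])
            then show "|Bs x| \<le>o |underS |B| y|" by (rule ordLess_imp_ordLeq)
          qed
          moreover have "|underS |B| y| <o |B|"
            using card_of_underS[OF card_of_Card_order] y YB Field_card_of by (metis subsetD)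
          ultimately have "|\<Union>x\<in>X. Bs x| <o |B|" using union_bound[OF infB XlB] by blast
          then have "|B| <o |B|" by (simp only: Bcov[symmetric])
          then show False using ordLess_irreflexive by blast
        qed
      qed
      then obtain xy where xy: "\<forall>y\<in>Y. xy y \<in> X \<and> |underS |B| y| \<le>o |Bs (xy y)|" by metis
      have "|xy ` Y| <o |X|" using ordLeq_ordLess_trans[OF card_of_image 2] .
      moreover have "xy ` Y \<subseteq> A" using xy XA by blast
      ultimately obtain a0 where a0: "a0 \<in> A" "\<forall>g\<in>xy ` Y. (g, a0) \<in> |A| \<and> g \<noteq> a0"
        using cofinal_small[OF X] by blast
      then obtain x0 where x0: "x0 \<in> X" "(a0, x0) \<in> |A|"
        using Xcof by blast
      have "\<forall>y\<in>Y. |underS |B| y| \<le>o |Bs x0|"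
      proof
        fix y assume y: "y \<in> Y"
        have "(xy y, x0) \<in> |A|" using a0(2) x0(2) y transA unfolding trans_def by blast
        then have "|Bs (xy y)| \<le>o |Bs x0|" using Bsmono card_of_mono1 by blast
        moreover have "|underS |B| y| \<le>o |Bs (xy y)|" using xy y by blast
        ultimately show "|underS |B| y| \<le>o |Bs x0|"
          using ordLeq_transitive by blast
      qed
      moreover have "|Y| <o |B|" using 2 XlB ordLess_transitive by blast
      moreover have "|Bs x0| <o |B|" using small x0 by blast
      ultimately have U: "|\<Union>y\<in>Y. underS |B| y| <o |B|" using union_bound[OF infB] by blast
      have "B \<subseteq> Y \<union> (\<Union>y\<in>Y. underS |B| y)"
      proof
        fix b assume b: "b \<in> B"
        then obtain y where "y \<in> Y" "(b, y) \<in> |B|"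
          using Ycof by blast
        then show "b \<in> Y \<union> (\<Union>y\<in>Y. underS |B| y)" unfolding underS_def by blast
      qed
      moreover have "|Y \<union> (\<Union>y\<in>Y. underS |B| y)| <o |B|"
        using card_of_Un_ordLess_infinite[OF infB \<open>|Y| <o |B|\<close> U] .
      ultimately have "|B| <o |B|" using ordLeq_ordLess_trans[OF card_of_mono1] by blast
      then show False using ordLess_irreflexive by blast
    qed
  qed
  then obtain x where x: "x \<in> X" "|Bs x| =o |B|" by blast
  define C where "C = under |A| x"
  have CA: "C \<subseteq> A"
  proof
    fix c assume "c \<in> C"
    then have "(c, x) \<in> |A|" unfolding C_def under_def by simp
    then have "c \<in> Field |A|" by (rule FieldI1)
    then show "c \<in> A" by (simp add: Field_card_of)
  qed
  have "C \<subseteq> {x} \<union> underS |A| x" unfolding C_def under_def underS_def by blast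
  moreover have "|{x} \<union> underS |A| x| <o |A|"
  proof (rule card_of_Un_ordLess_infinite[OF infA])
    show "|{x}| <o |A|" using fin_less_inf infA by blast
    have "x \<in> Field |A|" using x(1) XA by (auto simp: Field_card_of)
    from card_of_underS[OF card_of_Card_order this]
    show "|underS |A| x| <o |A|" .
  qed
  ultimately have Cl: "|C| <o |A|" using ordLeq_ordLess_trans[OF card_of_mono1] by blast
  have infD: "infinite (Bs x)"
  proof
    assume "finite (Bs x)"
    then have "finite B" using card_of_ordIso_finite[OF x(2)] by simp
    then show False using infB by simp
  qed
  then have "Bs x \<noteq> {}" by auto
  then obtain b1 where b1: "b1 \<in> Bs x" by blast
  have nb: "{a'\<in>A. E a' b \<and> (a', f b) \<in> |A|} \<subseteq> {a\<in>C. E a b}" if "b \<in> Bs x" for b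
  proof
    fix a assume a: "a \<in> {a'\<in>A. E a' b \<and> (a', f b) \<in> |A|}"
    have "(f b, x) \<in> |A|" using that unfolding Bs_def by simp
    then have "(a, x) \<in> |A|" using a transA unfolding trans_def by blast
    then show "a \<in> {a\<in>C. E a b}" using a unfolding C_def under_def by simp
  qed
  have ib: "infinite {a\<in>C. E a b}" if b: "b \<in> Bs x" for b
  proof -
    have "b \<in> B" using b unfolding Bs_def by simp
    then have "infinite {a'\<in>A. E a' b \<and> (a', f b) \<in> |A|}" using f by blast
    then show ?thesis using nb[OF b] finite_subset by blast
  qed
  have "infinite C"
  proof
    assume "finite C"
    then have "finite {a\<in>C. E a b1}" by simp
    then show False using ib[OF b1] by blast
  qed
  then have lk: "lk_graph C (Bs x) E" using infD ib unfolding lk_graph_def by simp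
  have BsB: "Bs x \<subseteq> B" unfolding Bs_def by blast
  show ?thesis
    by (rule exI[of _ C], rule exI[of _ "Bs x"]) (intro conjI CA BsB Cl x(2) lk)
qed

end
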